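(* Let $n_c\ge 3$ and $m\ge 1$ be integers, and let $\mathcal G=(\mathcal V,\mathcal E)$ be the unweighted undirected graph obtained by the following rule (R): take $m$ vertex-disjoint cycles $\mathcal C_0,\dots,\mathcal C_{m-1}$, each with $n_c$ nodes, and for each $p\in\{0,\dots,m-2\}$ identify one node of $\mathcal C_p$ with one node of $\mathcal C_{p+1}$. Consider the Kuramoto model $\dot\theta_i=\omega_i+\sum_j a_{ij}\sin(\theta_j-\theta_i)$ on $\mathcal G$ (with $a_{ij}=1$ if $(i,j)\in\mathcal E$ and $0$ otherwise) with identical natural frequencies. Then every stable phase-locked configuration $\theta^*$ satisfies, for all adjacent nodes $i,j$, that $\theta^*_i-\theta^*_j$ has a representative modulo $2\pi$ in $(-\pi/2,\pi/2)$.
   Context: Phases live in $\mathbb R/2\pi\mathbb Z$. A phase-locked configuration is a solution in which all $\dot\theta_i$ are equal; in the frame rotating at the common natural frequency (equivalently, setting all $\omega_i=0$) it is an equilibrium. It is called stable if it is a Lyapunov stable equilibrium of the dynamics in this rotating frame. *)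

theory Defs
  imports "HOL-Analysis.Analysis"
begin

text \<open>Rule (R): m vertex-disjoint cycles C_0..C_(m-1), each with nc nodes; node k of
cycle p is the pair (p,k) (k < nc), cycle edges (p,k) -- (p,(k+1) mod nc).
For each p < m-1 node (p, a p) of C_p is identified with node (p+1, b p) of C_(p+1).
The graph on the vertex type 'v is the quotient: pi maps the disjoint union of the
cycles onto the vertex set, identifying exactly the pairs in the equivalence relation
generated by the identifications; edges are exactly the images of cycle edges.\<close>

definition cycle_nodes :: "nat \<Rightarrow> nat \<Rightarrow> (nat \<times> nat) set" where
  "cycle_nodes nc m = {(p, k). p < m \<and> k < nc}"

definition ident_rel :: "nat \<Rightarrow> (nat \<Rightarrow> nat) \<Rightarrow> (nat \<Rightarrow> nat) \<Rightarrow> ((nat \<times> nat) \<times> (nat \<times> nat)) set" where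
  "ident_rel m a b = {((p, a p), (Suc p, b p)) | p. p + 1 < m}"

definition rule_R_graph :: "nat \<Rightarrow> nat \<Rightarrow> ('v \<Rightarrow> 'v \<Rightarrow> bool) \<Rightarrow> bool" where
  "rule_R_graph nc m E \<longleftrightarrow>
     (\<exists>(pi :: nat \<times> nat \<Rightarrow> 'v) (a :: nat \<Rightarrow> nat) (b :: nat \<Rightarrow> nat).
        (\<forall>p. p + 1 < m \<longrightarrow> a p < nc \<and> b p < nc) \<and>
        pi ` cycle_nodes nc m = UNIV \<and>
        (\<forall>x\<in>cycle_nodes nc m. \<forall>y\<in>cycle_nodes nc m.
            pi x = pi y \<longleftrightarrow> (x, y) \<in> (ident_rel m a b \<union> (ident_rel m a b)\<inverse>)\<^sup>*) \<and>
        (\<forall>i j. E i j \<longleftrightarrow>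
            (\<exists>p k. p < m \<and> k < nc \<and>
               ((i = pi (p, k) \<and> j = pi (p, (k + 1) mod nc)) \<or>
                (j = pi (p, k) \<and> i = pi (p, (k + 1) mod nc))))))"

text \<open>Kuramoto vector field in the rotating frame (identical natural frequencies):
  theta_i' = sum_j a_ij sin(theta_j - theta_i), a_ij = 1 if (i,j) is an edge, else 0.\<close>

definition kuramoto_field :: "('v::finite \<Rightarrow> 'v \<Rightarrow> bool) \<Rightarrow> real ^ 'v \<Rightarrow> real ^ 'v" where
  "kuramoto_field E \<theta> = (\<chi> i. \<Sum>j\<in>UNIV. (if E i j then 1 else 0) * sin (\<theta> $ j - \<theta> $ i))"

definition is_solution_from0 :: "('a::real_normed_vector \<Rightarrow> 'a) \<Rightarrow> (real \<Rightarrow> 'a) \<Rightarrow> bool" where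
  "is_solution_from0 F x \<longleftrightarrow>
     (\<forall>t\<ge>0. (x has_vector_derivative F (x t)) (at t within {0..}))"

definition lyapunov_stable :: "('a::real_normed_vector \<Rightarrow> 'a) \<Rightarrow> 'a \<Rightarrow> bool" where
  "lyapunov_stable F xs \<longleftrightarrow>
     (\<forall>\<epsilon>>0. \<exists>\<delta>>0. \<forall>x. is_solution_from0 F x \<and> dist (x 0) xs < \<delta> \<longrightarrow>
        (\<forall>t\<ge>0. dist (x t) xs < \<epsilon>))"

definition phase_locked :: "('v::finite \<Rightarrow> 'v \<Rightarrow> bool) \<Rightarrow> real ^ 'v \<Rightarrow> bool" where
  "phase_locked E \<theta> \<longleftrightarrow> kuramoto_field E \<theta> = 0"

end

theory Submission
  imports Defs
begin


lemma int_deriv_half: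
  fixes g :: "real \<Rightarrow> 'a::euclidean_space"
  assumes "continuous_on UNIV g" "t \<ge> 0"
  shows "((\<lambda>s. integral {0..s} g) has_vector_derivative g t) (at t within {0..})"
proof -
  have "((\<lambda>s. integral {0..s} g) has_vector_derivative g t) (at t within {0..t+1})"
    by (rule integral_has_vector_derivative) (use assms in \<open>auto intro: continuous_on_subset\<close>)
  moreover have "at t within {0..t+1} = at t within {0..}"
    by (rule at_within_nhd[where S="{t - 1 <..< t + 1}"]) auto
  ultimately show ?thesis by simp
qed

lemma int_cont_half:
  fixes g :: "real \<Rightarrow> 'a::euclidean_space"
  assumes "continuous_on UNIV g"
  shows "continuous_on {0..} (\<lambda>s. integral {0..s} g)"
  unfolding continuous_on_eq_continuous_within
  using int_deriv_half[OF assms] has_vector_derivative_continuous by fastforce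

lemma ode_exists:
  fixes F :: "'a::euclidean_space \<Rightarrow> 'a"
  assumes lip: "\<And>a b. norm (F a - F b) \<le> L * norm (a - b)" and L: "L > 0"
    and bnd: "\<And>a. norm (F a) \<le> M"
  shows "\<exists>x. x 0 = y \<and> (\<forall>t\<ge>0. (x has_vector_derivative F (x t)) (at t within {0..}))"
proof -
  define l where "l = 2 * L"
  have l: "l > 0" using L by (simp add: l_def)
  have contF: "continuous_on UNIV F"
  proof (rule continuous_onI)
    fix x and e :: real assume e: "e > 0"
    show "\<exists>d>0. \<forall>x'\<in>UNIV. dist x' x < d \<longrightarrow> dist (F x') (F x) \<le> e"
    proof (intro exI[of _ "e / L"] conjI ballI impI)
      fix x' assume "dist x' x < e / L"
      then have "L * dist x' x \<le> e" using L by (simp add: field_simps)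
      then show "dist (F x') (F x) \<le> e" using lip[of x' x] by (simp add: dist_norm)
    qed (use e L in auto)
  qed
  have M0: "M \<ge> 0" using bnd[of 0] norm_ge_zero order_trans by blast
  define G where "G u s = F (exp (l * s) *\<^sub>R apply_bcontfun u s)" for u :: "real \<Rightarrow>\<^sub>C 'a" and s
  have contG: "continuous_on UNIV (G u)" for u
    unfolding G_def
    by (rule continuous_on_compose2[OF contF]) (auto intro!: continuous_intros)
  define P where "P u t = exp (- l * max 0 t) *\<^sub>R (y + integral {0..max 0 t} (G u))" for u t
  have Pb: "P u \<in> bcontfun" for u
  proof (rule bcontfun_normI)
    have "continuous_on UNIV (\<lambda>t. integral {0..max 0 t} (G u))"
      by (rule continuous_on_compose2[OF int_cont_half[OF contG]]) (auto intro!: continuous_intros)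
    then show "continuous_on UNIV (P u)" unfolding P_def by (auto intro!: continuous_intros)
    fix t :: real
    let ?s = "max 0 t"
    have s0: "?s \<ge> 0" by (rule max.cobounded1)
    have intG: "(G u has_integral integral {0..?s} (G u)) (cbox 0 ?s)"
      unfolding cbox_interval
      by (rule integrable_integral, rule integrable_continuous_real, rule continuous_on_subset[OF contG], simp)
    have ib: "norm (integral {0..?s} (G u)) \<le> M * ?s"
      using has_integral_bound[OF M0 intG] bnd s0 by (simp add: G_def)
    have e1: "exp (l * ?s) \<ge> l * ?s" using exp_ge_add_one_self[of "l * ?s"] by linarith
    have "M * ?s * exp (- l * ?s) \<le> M / l"
    proof -
      have "M * ?s * exp (- l * ?s) = (M / l) * ((l * ?s) / exp (l * ?s))"
        using l by (simp add: exp_minus field_simps)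
      also have "\<dots> \<le> (M / l) * 1"
        apply (rule mult_left_mono) using e1 l M0 s0 by (auto simp: divide_le_eq)
      finally show ?thesis by simp
    qed
    moreover have "exp (- l * ?s) \<le> 1" using l s0 by simp
    moreover have "exp (- l * ?s) * norm y \<le> norm y"
      using \<open>exp (- l * ?s) \<le> 1\<close> by (simp add: mult_left_le_one_le)
    ultimately have "exp (- l * ?s) * (norm y + M * ?s) \<le> norm y + M / l"
      by (simp add: distrib_left mult.commute mult.left_commute)
    moreover have "norm (P u t) \<le> exp (- l * ?s) * (norm y + M * ?s)"
      unfolding P_def using ib
      by (simp add: mult_left_mono norm_triangle_le)
    ultimately show "norm (P u t) \<le> norm y + M / l" by linarith
  qed
  define Q where "Q u = Bcontfun (P u)" for u
  have QP: "apply_bcontfun (Q u) = P u" for u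
    unfolding Q_def using Pb[of u] by (simp add: Bcontfun_inverse)
  have contr: "dist (Q u) (Q v) \<le> (1/2) * dist u v" for u v
  proof (rule dist_bound)
    fix t :: real
    let ?s = "max 0 t"
    let ?D = "dist u v"
    have s0: "?s \<ge> 0" by (rule max.cobounded1)
    have iu: "G u integrable_on {0..?s}" for u
      by (rule integrable_continuous_real, rule continuous_on_subset[OF contG], simp)
    have pt: "norm (G u r - G v r) \<le> L * ?D * exp (l * r)" for r
    proof -
      have "norm (G u r - G v r) \<le> L * norm (exp (l * r) *\<^sub>R apply_bcontfun u r - exp (l * r) *\<^sub>R apply_bcontfun v r)"
        unfolding G_def by (rule lip)
      also have "\<dots> = L * (exp (l * r) * dist (apply_bcontfun u r) (apply_bcontfun v r))"
        by (simp add: dist_norm scaleR_diff_right[symmetric])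
      also have "\<dots> \<le> L * (exp (l * r) * ?D)"
        using L by (intro mult_left_mono dist_bounded) auto
      finally show ?thesis by (simp add: algebra_simps)
    qed
    have hi: "((\<lambda>r. L * ?D * exp (l * r)) has_integral (L * ?D * exp (l * ?s) / l - L * ?D * exp (l * 0) / l)) {0..?s}"
    proof (rule fundamental_theorem_of_calculus[OF s0])
      fix r assume "r \<in> {0..?s}"
      show "((\<lambda>r. L * ?D * exp (l * r) / l) has_vector_derivative L * ?D * exp (l * r)) (at r within {0..?s})"
        unfolding has_real_derivative_iff_has_vector_derivative[symmetric]
        using l by (auto intro!: derivative_eq_intros)
    qed
    have "norm (integral {0..?s} (\<lambda>r. G u r - G v r)) \<le> integral {0..?s} (\<lambda>r. L * ?D * exp (l * r))"
      by (rule Henstock_Kurzweil_Integration.integral_norm_bound_integral)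
         (use iu hi pt in \<open>auto intro: integrable_diff\<close>)
    also have "\<dots> = L * ?D * (exp (l * ?s) - 1) / l"
      unfolding integral_unique[OF hi] by (simp add: diff_divide_distrib right_diff_distrib)
    finally have nb: "norm (integral {0..?s} (G u) - integral {0..?s} (G v)) \<le> L * ?D * (exp (l * ?s) - 1) / l"
      using integral_diff[OF iu iu] by simp
    have "dist (apply_bcontfun (Q u) t) (apply_bcontfun (Q v) t)
        = exp (- l * ?s) * norm (integral {0..?s} (G u) - integral {0..?s} (G v))"
      unfolding QP P_def dist_norm by (simp add: scaleR_diff_right[symmetric])
    also have "\<dots> \<le> exp (- l * ?s) * (L * ?D * (exp (l * ?s) - 1) / l)"
      by (rule mult_left_mono[OF nb]) simp
    also have "\<dots> = (1/2) * ?D * (1 - exp (- l * ?s))"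
    proof -
      have ee: "exp (- l * ?s) * exp (l * ?s) = 1" by (simp add: exp_minus)
      have "exp (- l * ?s) * (L * ?D * (exp (l * ?s) - 1) / l) = (L / l) * ?D * (exp (- l * ?s) * exp (l * ?s) - exp (- l * ?s))"
        using l by (simp add: field_simps)
      also have "\<dots> = (1/2) * ?D * (1 - exp (- l * ?s))" unfolding ee using L by (simp add: l_def)
      finally show ?thesis .
    qed
    also have "\<dots> \<le> (1/2) * ?D"
    proof -
      have "exp (- l * ?s) > 0" by simp
      then have "0 \<le> (1/2) * ?D" "1 - exp (- l * ?s) \<le> 1" by auto
      moreover have "0 \<le> 1 - exp (- l * ?s)" using s0 l by (simp add: mult_nonneg_nonneg)
      ultimately show ?thesis by (metis mult_right_le_one_le)
    qed
    finally show "dist (apply_bcontfun (Q u) t) (apply_bcontfun (Q v) t) \<le> (1/2) * ?D" .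
  qed
  have "\<exists>!u. Q u = u" by (rule banach_fix_type[of "1/2"]) (use contr in auto)
  then obtain u0 where u0: "Q u0 = u0" by blast
  define x where "x t = exp (l * t) *\<^sub>R apply_bcontfun u0 t" for t
  have Gx: "G u0 = (\<lambda>s. F (x s))" unfolding G_def x_def by (rule refl)
  have xeq: "x t = y + integral {0..t} (\<lambda>s. F (x s))" if t: "t \<ge> 0" for t
  proof -
    have "apply_bcontfun u0 t = P u0 t" using QP[of u0] unfolding u0 by (rule fun_cong)
    also have "\<dots> = exp (- l * t) *\<^sub>R (y + integral {0..t} (\<lambda>s. F (x s)))"
      unfolding P_def Gx using t by (simp add: max_def)
    finally have "x t = exp (l * t) *\<^sub>R exp (- l * t) *\<^sub>R (y + integral {0..t} (\<lambda>s. F (x s)))"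
      unfolding x_def by simp
    also have "\<dots> = y + integral {0..t} (\<lambda>s. F (x s))"
      by (simp add: exp_minus)
    finally show ?thesis .
  qed
  show ?thesis
  proof (intro exI[of _ x] conjI allI impI)
    show "x 0 = y" using xeq[of 0] by simp
    fix t :: real assume t: "t \<ge> 0"
    have "((\<lambda>t. y + integral {0..t} (\<lambda>s. F (x s))) has_vector_derivative 0 + F (x t)) (at t within {0..})"
      by (rule has_vector_derivative_add[OF has_vector_derivative_const int_deriv_half[OF contG[of u0, unfolded Gx] t]])
    then have "((\<lambda>t. y + integral {0..t} (\<lambda>s. F (x s))) has_vector_derivative F (x t)) (at t within {0..})"
      by simp
    then show "(x has_vector_derivative F (x t)) (at t within {0..})"
      by (rule has_vector_derivative_transform[rotated 2]) (use t xeq in auto)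
  qed
qed


lemma mvt_real:
  fixes f :: "real \<Rightarrow> real"
  assumes "a < b" "continuous_on {a..b} f"
    "\<And>x. a < x \<Longrightarrow> x < b \<Longrightarrow> (f has_real_derivative f' x) (at x)"
  shows "\<exists>\<xi>. a < \<xi> \<and> \<xi> < b \<and> f b - f a = (b - a) * f' \<xi>"
proof -
  have d: "\<And>x. a < x \<Longrightarrow> x < b \<Longrightarrow> (f has_derivative (*) (f' x)) (at x)"
    using assms(3) by (simp add: has_field_derivative_imp_has_derivative)
  obtain \<xi> where "a < \<xi>" "\<xi> < b" "f b - f a = (*) (f' \<xi>) (b - a)"
    using mvt[OF assms(1,2) d] by blast
  then show ?thesis by (auto simp: mult.commute)
qed

lemma abs_sin_diff_le: "\<bar>sin x - sin y\<bar> \<le> \<bar>x - y\<bar>" for x y :: real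
proof -
  have "\<bar>sin x - sin y\<bar> = 2 * \<bar>sin ((x - y) / 2)\<bar> * \<bar>cos ((x + y) / 2)\<bar>"
    by (simp add: sin_diff_sin abs_mult)
  also have "\<dots> \<le> 2 * \<bar>(x - y) / 2\<bar> * 1"
    by (intro mult_mono abs_sin_x_le_abs_x) auto
  finally show ?thesis by simp
qed

lemma cos_ineq_strict:
  fixes K :: real
  assumes K: "K \<ge> 2" and t: "0 < t" "t \<le> pi / (2 * K)"
  shows "K * (1 - cos t) < 1 - cos (K * t)"
proof -
  define f where "f x = 1 - cos (K * x) - K * (1 - cos x)" for x
  have "\<exists>\<xi>. 0 < \<xi> \<and> \<xi> < t \<and> f t - f 0 = (t - 0) * (K * sin (K * \<xi>) - K * sin \<xi>)"
    by (rule mvt_real[OF t(1)]) (auto simp: f_def intro!: continuous_intros derivative_eq_intros)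
  then obtain \<xi> where xi: "0 < \<xi>" "\<xi> < t" "f t - f 0 = t * (K * sin (K * \<xi>) - K * sin \<xi>)" by auto
  have Kpos: "K > 0" using K by simp
  have kx: "K * \<xi> \<le> pi / 2"
  proof -
    have "K * \<xi> \<le> K * t" using xi Kpos by simp
    also have "K * t \<le> K * (pi / (2 * K))" using t Kpos by (intro mult_left_mono) auto
    finally show ?thesis using Kpos by simp
  qed
  moreover have "\<xi> < K * \<xi>" using xi K by simp
  ultimately have "sin \<xi> < sin (K * \<xi>)"
    by (intro sin_monotone_2pi) (use xi pi_gt_zero in linarith)+
  then have "f t > 0" using xi Kpos by (simp add: f_def[of 0])
  then show ?thesis by (simp add: f_def)
qed

lemma sin_ineq_strict:
  fixes K :: real
  assumes K: "K \<ge> 2" and t: "0 < t" "t \<le> pi / (2 * K)"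
  shows "sin (K * t) < K * sin t"
proof -
  define f where "f x = K * sin x - sin (K * x)" for x
  have "\<exists>\<xi>. 0 < \<xi> \<and> \<xi> < t \<and> f t - f 0 = (t - 0) * (K * cos \<xi> - K * cos (K * \<xi>))"
    by (rule mvt_real[OF t(1)]) (auto simp: f_def intro!: continuous_intros derivative_eq_intros)
  then obtain \<xi> where xi: "0 < \<xi>" "\<xi> < t" "f t - f 0 = t * (K * cos \<xi> - K * cos (K * \<xi>))" by auto
  have Kpos: "K > 0" using K by simp
  have kx: "K * \<xi> \<le> pi / 2"
  proof -
    have "K * \<xi> \<le> K * t" using xi Kpos by simp
    also have "K * t \<le> K * (pi / (2 * K))" using t Kpos by (intro mult_left_mono) auto
    finally show ?thesis using Kpos by simp
  qed
  moreover have "\<xi> < K * \<xi>" using xi K by simp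
  ultimately have "cos (K * \<xi>) < cos \<xi>"
    by (intro cos_monotone_0_pi) (use xi pi_gt_zero in linarith)+
  then have "f t > 0" using xi Kpos by (simp add: f_def[of 0])
  then show ?thesis by (simp add: f_def)
qed



definition CV :: "nat \<Rightarrow> real set" where
  "CV n = (\<lambda>(j,t). real_of_int j * cos (pi * real_of_int t / real_of_int j)) ` ({-int n..int n} \<times> {-int n..int n})"

lemma finite_CV: "finite (CV n)" unfolding CV_def by simp

lemma zero_in_CV: "0 \<in> CV n"
  unfolding CV_def by (rule image_eqI[where x="(0,0)"]) auto

lemma sin_eq_cases:
  fixes x s :: real
  assumes "sin x = s"
  shows "\<exists>j::int. \<exists>ng::bool. x = (if ng then pi - arcsin s else arcsin s) + 2 * pi * j \<and>
            cos x = (if ng then - cos (arcsin s) else cos (arcsin s))"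
proof -
  have s1: "-1 \<le> s" "s \<le> 1" using assms by auto
  let ?a = "arcsin s"
  have sa: "sin ?a = s" using s1 by simp
  have "cos x ^ 2 = cos ?a ^ 2"
    using sa assms by (simp add: cos_squared_eq)
  then have "cos x = cos ?a \<or> cos x = - cos ?a"
    by (simp add: power2_eq_iff)
  then show ?thesis
  proof
    assume c: "cos x = cos ?a"
    then obtain j :: int where "x = ?a + 2 * pi * j" using sin_cos_eq_iff[of x ?a] sa assms by auto
    then show ?thesis using c by (intro exI[of _ j] exI[of _ False]) auto
  next
    assume c: "cos x = - cos ?a"
    have "sin x = sin (pi - ?a) \<and> cos x = cos (pi - ?a)" using c sa assms by simp
    then obtain j :: int where "x = (pi - ?a) + 2 * pi * j" using sin_cos_eq_iff by blast
    then show ?thesis using c by (intro exI[of _ j] exI[of _ True]) auto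
  qed
qed

lemma cyc_val:
  fixes dd :: "nat \<Rightarrow> real"
  assumes sn: "\<And>k. k < n \<Longrightarrow> sin (dd k) = s" and sm: "(\<Sum>k<n. dd k) = 0"
  shows "(\<Sum>k<n. cos (dd k)) \<in> CV n"
proof -
  let ?a = "arcsin s"
  have "\<forall>k\<in>{..<n}. \<exists>jn :: int \<times> bool. dd k = (if snd jn then pi - ?a else ?a) + 2 * pi * of_int (fst jn) \<and>
            cos (dd k) = (if snd jn then - cos ?a else cos ?a)"
  proof
    fix k assume "k \<in> {..<n}"
    then obtain j :: int and ng where jn: "dd k = (if ng then pi - ?a else ?a) + 2 * pi * j \<and>
            cos (dd k) = (if ng then - cos ?a else cos ?a)"
      using sin_eq_cases[OF sn] by blast
    show "\<exists>jn :: int \<times> bool. dd k = (if snd jn then pi - ?a else ?a) + 2 * pi * of_int (fst jn) \<and>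
            cos (dd k) = (if snd jn then - cos ?a else cos ?a)"
      apply (rule exI[of _ "(j, ng)"]) unfolding fst_conv snd_conv by (rule jn)
  qed
  then obtain JN :: "nat \<Rightarrow> int \<times> bool" where JN0: "\<forall>k\<in>{..<n}. dd k = (if snd (JN k) then pi - ?a else ?a) + 2 * pi * of_int (fst (JN k)) \<and>
            cos (dd k) = (if snd (JN k) then - cos ?a else cos ?a)"
    by (rule bchoice[elim_format]) blast
  have JN: "dd k = (if snd (JN k) then pi - ?a else ?a) + 2 * pi * of_int (fst (JN k)) \<and>
            cos (dd k) = (if snd (JN k) then - cos ?a else cos ?a)" if "k < n" for k
    using JN0 that by blast
  define \<sigma> where "\<sigma> k = (if snd (JN k) then 1 else 0 :: int)" for k
  define S where "S = (\<Sum>k<n. \<sigma> k)"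
  define Jt where "Jt = (\<Sum>k<n. fst (JN k))"
  have dk: "dd k = ?a + of_int (\<sigma> k) * (pi - 2 * ?a) + 2 * pi * of_int (fst (JN k))" if "k < n" for k
    using conjunct1[OF JN[OF that]] by (simp add: \<sigma>_def algebra_simps)
  have ck: "cos (dd k) = (1 - 2 * of_int (\<sigma> k)) * cos ?a" if "k < n" for k
    using conjunct2[OF JN[OF that]] by (simp add: \<sigma>_def)
  have "0 = (\<Sum>k<n. ?a + of_int (\<sigma> k) * (pi - 2 * ?a) + 2 * pi * of_int (fst (JN k)))"
    using sm dk by simp
  also have "\<dots> = real n * ?a + of_int S * (pi - 2 * ?a) + 2 * pi * of_int Jt"
    by (simp add: sum.distrib S_def Jt_def sum_distrib_left sum_distrib_right of_int_sum)
  finally have eq0: "0 = real n * ?a + of_int S * (pi - 2 * ?a) + 2 * pi * of_int Jt" .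
  have cs: "(\<Sum>k<n. cos (dd k)) = of_int (int n - 2 * S) * cos ?a"
  proof -
    have "(\<Sum>k<n. cos (dd k)) = (\<Sum>k<n. (1 - 2 * of_int (\<sigma> k)) * cos ?a)"
      using ck by simp
    also have "\<dots> = of_int (int n - 2 * S) * cos ?a"
      by (simp add: S_def sum_distrib_right[symmetric] sum_subtractf of_int_sum sum_distrib_left[symmetric])
    finally show ?thesis .
  qed
  have S0: "0 \<le> S" unfolding S_def by (rule sum_nonneg) (simp add: \<sigma>_def)
  have Sn: "S \<le> int n"
  proof -
    have "S \<le> (\<Sum>k<n. 1)" unfolding S_def by (rule sum_mono) (simp add: \<sigma>_def)
    then show ?thesis by simp
  qed
  define jj where "jj = int n - 2 * S"
  define t where "t = - S - 2 * Jt"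
  have jjt: "of_int jj * ?a = pi * of_int t"
    using eq0 unfolding jj_def t_def by (simp add: algebra_simps)
  show ?thesis
  proof (cases "jj = 0")
    case True
    then show ?thesis using cs zero_in_CV by (simp add: jj_def)
  next
    case False
    have abnd: "\<bar>?a\<bar> \<le> pi / 2"
    proof (cases "n = 0")
      case True then show ?thesis using False by (simp add: jj_def) (use S0 Sn in linarith)
    next
      case False
      then have "sin (dd 0) = s" using sn by simp
      then have "-1 \<le> s" "s \<le> 1" by (auto simp: sin_ge_minus_one)
      then show ?thesis using arcsin_bounded[of s] by auto
    qed
    have jjb: "\<bar>jj\<bar> \<le> int n" using S0 Sn by (simp add: jj_def)
    have "pi * \<bar>of_int t\<bar> = \<bar>of_int jj\<bar> * \<bar>?a\<bar>" using jjt
      by (metis abs_mult abs_of_pos pi_gt_zero)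
    also have "\<dots> \<le> of_int (int n) * (pi / 2)"
      using jjb abnd by (intro mult_mono) auto
    finally have "pi * \<bar>of_int t\<bar> \<le> pi * real n" using pi_gt_zero by simp
    then have "\<bar>t\<bar> \<le> int n" using pi_gt_zero by (simp add: mult_le_cancel_left)
    then have mem: "(jj, t) \<in> {-int n..int n} \<times> {-int n..int n}" using jjb by auto
    have "?a = pi * of_int t / of_int jj" using jjt False by (simp add: field_simps)
    then have "(\<Sum>k<n. cos (dd k)) = real_of_int jj * cos (pi * real_of_int t / real_of_int jj)"
      using cs by (simp add: jj_def)
    then show ?thesis unfolding CV_def using mem by (auto intro!: image_eqI[where x="(jj,t)"])
  qed
qed



locale cactus =
  fixes nc m :: nat and pn :: "nat \<times> nat \<Rightarrow> 'v::finite" and a b :: "nat \<Rightarrow> nat"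
    and E :: "'v \<Rightarrow> 'v \<Rightarrow> bool"
  assumes nc3: "nc \<ge> 3"
    and ab: "\<And>p. p + 1 < m \<Longrightarrow> a p < nc \<and> b p < nc"
    and surj: "pn ` cycle_nodes nc m = UNIV"
    and ident: "\<And>x y. x \<in> cycle_nodes nc m \<Longrightarrow> y \<in> cycle_nodes nc m \<Longrightarrow>
        pn x = pn y \<longleftrightarrow> (x, y) \<in> (ident_rel m a b \<union> (ident_rel m a b)\<inverse>)\<^sup>*"
    and Edef: "\<And>i j. E i j \<longleftrightarrow>
            (\<exists>p k. p < m \<and> k < nc \<and>
               ((i = pn (p, k) \<and> j = pn (p, (k + 1) mod nc)) \<or>
                (j = pn (p, k) \<and> i = pn (p, (k + 1) mod nc))))"
begin

definition up :: "nat \<times> nat \<Rightarrow> nat \<times> nat \<Rightarrow> bool" where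
  "up x y \<longleftrightarrow> fst x < fst y \<and> snd x = a (fst x) \<and> snd y = b (fst y - 1) \<and>
     (\<forall>r. fst x < r \<and> r < fst y \<longrightarrow> b (r - 1) = a r)"

lemma rtc_chain:
  assumes "(x, y) \<in> (ident_rel m a b \<union> (ident_rel m a b)\<inverse>)\<^sup>*"
  shows "x = y \<or> up x y \<or> up y x"
  using assms
proof (induction rule: rtrancl_induct)
  case base
  then show ?case by simp
next
  case (step y z)
  from step.hyps(2) obtain p where
    st: "(y = (p, a p) \<and> z = (Suc p, b p)) \<or> (z = (p, a p) \<and> y = (Suc p, b p))"
    unfolding ident_rel_def by auto
  from step.IH show ?case
  proof (elim disjE)
    assume "x = y" then show ?thesis using st by (auto simp: up_def)
  next
    assume u: "up x y"
    from st show ?thesis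
    proof
      assume s: "y = (p, a p) \<and> z = (Suc p, b p)"
      then have "up x z" using u unfolding up_def
        by (auto simp: less_Suc_eq)
      then show ?thesis by simp
    next
      assume s: "z = (p, a p) \<and> y = (Suc p, b p)"
      show ?thesis
      proof (cases "fst x = p")
        case True
        then have "x = z" using u s unfolding up_def by (cases x) auto
        then show ?thesis by simp
      next
        case False
        then have "up x z" using u s unfolding up_def by auto
        then show ?thesis by simp
      qed
    qed
  next
    assume u: "up y x"
    from st show ?thesis
    proof
      assume s: "y = (p, a p) \<and> z = (Suc p, b p)"
      show ?thesis
      proof (cases "fst x = Suc p")
        case True
        then have "x = z" using u s unfolding up_def by (cases x) auto
        then show ?thesis by simp
      next
        case False
        then have "up z x" using u s unfolding up_def by auto
        then show ?thesis by simp
      qed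
    next
      assume s: "z = (p, a p) \<and> y = (Suc p, b p)"
      have u1: "Suc p < fst x" "b p = a (Suc p)" "snd x = b (fst x - 1)"
        "\<And>r. Suc p < r \<Longrightarrow> r < fst x \<Longrightarrow> b (r - 1) = a r"
        using u s unfolding up_def by auto
      have "b (r - 1) = a r" if "p < r" "r < fst x" for r
      proof (cases "r = Suc p")
        case True then show ?thesis using u1 by simp
      next
        case False then show ?thesis using u1 that by simp
      qed
      then have "up z x" using u1 s unfolding up_def by auto
      then show ?thesis by simp
    qed
  qed
qed

lemma pn_chain:
  assumes "x \<in> cycle_nodes nc m" "y \<in> cycle_nodes nc m" "pn x = pn y"
  shows "x = y \<or> up x y \<or> up y x"
  using rtc_chain ident assms by blast

lemma pn_same_level:
  assumes "x \<in> cycle_nodes nc m" "y \<in> cycle_nodes nc m" "pn x = pn y" "fst x = fst y"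
  shows "x = y"
  using pn_chain[OF assms(1-3)] assms(4) unfolding up_def by auto

lemma pn_up:
  assumes "x \<in> cycle_nodes nc m" "y \<in> cycle_nodes nc m" "pn x = pn y" "fst x < fst y"
  shows "up x y"
  using pn_chain[OF assms(1-3)] assms(4) unfolding up_def by auto

definition nx :: "nat \<Rightarrow> nat" where "nx k = (k + 1) mod nc"
definition I :: "(nat \<times> nat) set" where "I = {..<m} \<times> {..<nc}"
definition A :: "nat \<times> nat \<Rightarrow> 'v" where "A x = pn x"
definition B :: "nat \<times> nat \<Rightarrow> 'v" where "B x = pn (fst x, nx (snd x))"

lemma nx_lt: "nx k < nc" using nc3 by (simp add: nx_def)

lemma nx_cases: "k < nc \<Longrightarrow> (k + 1 < nc \<and> nx k = k + 1) \<or> (k + 1 = nc \<and> nx k = 0)"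
proof (cases "k + 1 < nc")
  case True then show ?thesis by (simp add: nx_def)
next
  case False
  assume "k < nc"
  then have "k + 1 = nc" using False by simp
  then show ?thesis by (simp add: nx_def)
qed

lemma nx_ne: "k < nc \<Longrightarrow> nx k \<noteq> k"
  using nx_cases[of k] nc3 by auto

lemma nx_inj: "k < nc \<Longrightarrow> l < nc \<Longrightarrow> nx k = nx l \<Longrightarrow> k = l"
  using nx_cases[of k] nx_cases[of l] by auto

lemma nx_cross: "k < nc \<Longrightarrow> l < nc \<Longrightarrow> k = nx l \<Longrightarrow> nx k = l \<Longrightarrow> False"
  using nx_cases[of k] nx_cases[of l] nc3 by auto

lemma I_nodes: "x \<in> I \<Longrightarrow> x \<in> cycle_nodes nc m" "x \<in> I \<Longrightarrow> (fst x, nx (snd x)) \<in> cycle_nodes nc m"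
  by (auto simp: I_def cycle_nodes_def nx_lt)

lemma up_lev: "up x y \<Longrightarrow> up x' y' \<Longrightarrow> fst x = fst x' \<Longrightarrow> snd x = snd x'"
  unfolding up_def by auto

lemma up_lev2: "up x y \<Longrightarrow> up x' y' \<Longrightarrow> fst y = fst y' \<Longrightarrow> snd y = snd y'"
  unfolding up_def by auto

lemma AB_ne: "x \<in> I \<Longrightarrow> A x \<noteq> B x"
proof
  assume x: "x \<in> I" "A x = B x"
  then have "x = (fst x, nx (snd x))"
    using pn_same_level[OF I_nodes(1)[OF x(1)] I_nodes(2)[OF x(1)]] by (simp add: A_def B_def)
  then show False using nx_ne[of "snd x"] x(1) by (cases x) (auto simp: I_def)
qed

lemma edge_inj:
  assumes x: "x \<in> I" and y: "y \<in> I" and eA: "A x = A y" and eB: "B x = B y"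
  shows "x = y"
proof -
  obtain p k where xp: "x = (p, k)" by (cases x)
  obtain q l where yq: "y = (q, l)" by (cases y)
  have kl: "k < nc" "l < nc" using x y xp yq by (auto simp: I_def)
  have n1: "(p,k) \<in> cycle_nodes nc m" "(q,l) \<in> cycle_nodes nc m"
    "(p, nx k) \<in> cycle_nodes nc m" "(q, nx l) \<in> cycle_nodes nc m"
    using I_nodes x y xp yq by auto
  have e1: "pn (p,k) = pn (q,l)" and e2: "pn (p, nx k) = pn (q, nx l)"
    using eA eB xp yq by (auto simp: A_def B_def)
  consider "p = q" | "p < q" | "q < p" by linarith
  then show ?thesis
  proof cases
    case 1 then show ?thesis using pn_same_level[OF n1(1,2) e1] xp yq by simp
  next
    case 2
    have "up (p,k) (q,l)" "up (p, nx k) (q, nx l)"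
      using pn_up[OF n1(1,2) e1] pn_up[OF n1(3,4) e2] 2 by auto
    then have "k = nx k" using up_lev by fastforce
    then show ?thesis using nx_ne kl by metis
  next
    case 3
    have "up (q,l) (p,k)" "up (q, nx l) (p, nx k)"
      using pn_up[OF n1(2,1) e1[symmetric]] pn_up[OF n1(4,3) e2[symmetric]] 3 by auto
    then have "l = nx l" using up_lev by fastforce
    then show ?thesis using nx_ne kl by metis
  qed
qed

lemma edge_cross:
  assumes x: "x \<in> I" and y: "y \<in> I" and eA: "A x = B y" and eB: "B x = A y"
  shows False
proof -
  obtain p k where xp: "x = (p, k)" by (cases x)
  obtain q l where yq: "y = (q, l)" by (cases y)
  have kl: "k < nc" "l < nc" using x y xp yq by (auto simp: I_def)
  have n1: "(p,k) \<in> cycle_nodes nc m" "(q,l) \<in> cycle_nodes nc m"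
    "(p, nx k) \<in> cycle_nodes nc m" "(q, nx l) \<in> cycle_nodes nc m"
    using I_nodes x y xp yq by auto
  have e1: "pn (p,k) = pn (q,nx l)" and e2: "pn (p, nx k) = pn (q, l)"
    using eA eB xp yq by (auto simp: A_def B_def)
  consider "p = q" | "p < q" | "q < p" by linarith
  then show ?thesis
  proof cases
    case 1
    then have "k = nx l" "nx k = l"
      using pn_same_level[OF n1(1,4) e1] pn_same_level[OF n1(3,2) e2] by auto
    then show ?thesis using nx_cross kl by blast
  next
    case 2
    have "up (p,k) (q,nx l)" "up (p, nx k) (q, l)"
      using pn_up[OF n1(1,4) e1] pn_up[OF n1(3,2) e2] 2 by auto
    then have "k = nx k" using up_lev by fastforce
    then show ?thesis using nx_ne kl by metis
  next
    case 3
    have "up (q,nx l) (p,k)" "up (q, l) (p, nx k)"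
      using pn_up[OF n1(4,1) e1[symmetric]] pn_up[OF n1(2,3) e2[symmetric]] 3 by auto
    then have "nx l = l" using up_lev by fastforce
    then show ?thesis using nx_ne kl by metis
  qed
qed

lemma E_iff: "E i j \<longleftrightarrow> (\<exists>x\<in>I. (i = A x \<and> j = B x) \<or> (j = A x \<and> i = B x))"
  unfolding Edef A_def B_def I_def nx_def by auto

lemma E_pairs: "{(i, j). E i j} = (\<lambda>x. (A x, B x)) ` I \<union> (\<lambda>x. (B x, A x)) ` I"
proof
  show "{(i, j). E i j} \<subseteq> (\<lambda>x. (A x, B x)) ` I \<union> (\<lambda>x. (B x, A x)) ` I"
  proof
    fix z assume "z \<in> {(i, j). E i j}"
    then obtain x where "x \<in> I" "(fst z = A x \<and> snd z = B x) \<or> (snd z = A x \<and> fst z = B x)"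
      unfolding E_iff by (cases z) auto
    then show "z \<in> (\<lambda>x. (A x, B x)) ` I \<union> (\<lambda>x. (B x, A x)) ` I"
      by (cases z) auto
  qed
  show "(\<lambda>x. (A x, B x)) ` I \<union> (\<lambda>x. (B x, A x)) ` I \<subseteq> {(i, j). E i j}"
    unfolding E_iff by auto
qed

lemma edge_sum:
  fixes f :: "'v \<Rightarrow> 'v \<Rightarrow> real"
  shows "(\<Sum>i\<in>UNIV. \<Sum>j\<in>UNIV. if E i j then f i j else 0) = (\<Sum>x\<in>I. f (A x) (B x) + f (B x) (A x))"
proof -
  have fI: "finite I" by (simp add: I_def)
  have "(\<Sum>i\<in>UNIV. \<Sum>j\<in>UNIV. if E i j then f i j else 0) = (\<Sum>(i,j)\<in>UNIV. if E i j then f i j else 0)"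
    by (simp add: sum.cartesian_product)
  also have "\<dots> = (\<Sum>(i,j)\<in>{(i, j). E i j}. if E i j then f i j else 0)"
    by (rule sum.mono_neutral_right) (auto split: if_splits)
  also have "\<dots> = (\<Sum>(i,j)\<in>{(i, j). E i j}. f i j)"
    by (rule sum.cong) auto
  also have "\<dots> = (\<Sum>(i,j)\<in>(\<lambda>x. (A x, B x)) ` I. f i j) + (\<Sum>(i,j)\<in>(\<lambda>x. (B x, A x)) ` I. f i j)"
    unfolding E_pairs
    by (rule sum.union_disjoint) (use fI edge_cross in auto)
  also have "\<dots> = (\<Sum>x\<in>I. f (A x) (B x)) + (\<Sum>x\<in>I. f (B x) (A x))"
  proof -
    have "inj_on (\<lambda>x. (A x, B x)) I" "inj_on (\<lambda>x. (B x, A x)) I"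
      using edge_inj unfolding inj_on_def by auto
    then show ?thesis by (simp add: sum.reindex)
  qed
  finally show ?thesis by (simp add: sum.distrib)
qed

end


context cactus begin

abbreviation F where "F \<equiv> kuramoto_field E"

definition dd :: "real^'v \<Rightarrow> nat \<times> nat \<Rightarrow> real" where "dd z x = z $ B x - z $ A x"

definition W :: "real^'v \<Rightarrow> real" where "W z = - (\<Sum>x\<in>I. cos (dd z x))"

lemma finite_I: "finite I" by (simp add: I_def)

lemma grad: "F z \<bullet> h = - (\<Sum>x\<in>I. sin (dd z x) * (h $ B x - h $ A x))"
proof -
  have "F z \<bullet> h = (\<Sum>i\<in>UNIV. \<Sum>j\<in>UNIV. if E i j then sin (z $ j - z $ i) * h $ i else 0)"
    unfolding kuramoto_field_def inner_vec_def
    by (simp add: sum_distrib_right if_distrib if_distribR cong: if_cong)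
  also have "\<dots> = (\<Sum>x\<in>I. sin (z $ B x - z $ A x) * h $ A x + sin (z $ A x - z $ B x) * h $ B x)"
    by (rule edge_sum)
  also have "\<dots> = - (\<Sum>x\<in>I. sin (dd z x) * (h $ B x - h $ A x))"
  proof -
    have sm: "sin (z $ A x - z $ B x) = - sin (z $ B x - z $ A x)" for x
      by (metis minus_diff_eq sin_minus)
    show ?thesis unfolding dd_def sm by (simp add: sum_negf[symmetric] algebra_simps)
  qed
  finally show ?thesis .
qed

definition lift :: "(nat \<times> nat \<Rightarrow> real) \<Rightarrow> real^'v" where
  "lift g = (\<chi> v. g (SOME x. x \<in> cycle_nodes nc m \<and> pn x = v))"

lemma lift_pn:
  assumes resp: "\<And>x y. x \<in> cycle_nodes nc m \<Longrightarrow> y \<in> cycle_nodes nc m \<Longrightarrow> pn x = pn y \<Longrightarrow> g x = g y"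
    and x: "x \<in> cycle_nodes nc m"
  shows "lift g $ pn x = g x"
proof -
  have ex: "\<exists>y. y \<in> cycle_nodes nc m \<and> pn y = pn x" using x by blast
  let ?y = "SOME y. y \<in> cycle_nodes nc m \<and> pn y = pn x"
  have y: "?y \<in> cycle_nodes nc m \<and> pn ?y = pn x" by (rule someI_ex[OF ex])
  have "g ?y = g x" using y x by (intro resp) auto
  then show ?thesis unfolding lift_def by simp
qed

lemma lift_any:
  "\<exists>x. x \<in> cycle_nodes nc m \<and> lift g $ v = g x"
proof -
  have "v \<in> pn ` cycle_nodes nc m" using surj by simp
  then have ex: "\<exists>y. y \<in> cycle_nodes nc m \<and> pn y = v" by blast
  let ?y = "SOME y. y \<in> cycle_nodes nc m \<and> pn y = v"
  have "?y \<in> cycle_nodes nc m \<and> pn ?y = v" by (rule someI_ex[OF ex])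
  then show ?thesis unfolding lift_def by (intro exI[of _ ?y]) simp
qed

definition hn :: "nat \<Rightarrow> (nat \<Rightarrow> real) \<Rightarrow> nat \<times> nat \<Rightarrow> real" where
  "hn p H x = (if fst x < p then H (b (p - 1)) else if fst x = p then H (snd x) else H (a p))"

lemma hn_resp:
  assumes "x \<in> cycle_nodes nc m" "y \<in> cycle_nodes nc m" "pn x = pn y"
  shows "hn p H x = hn p H y"
proof -
  have key: "hn p H x = hn p H y" if u: "up x y" for x y
  proof -
    have u1: "fst x < fst y" "snd x = a (fst x)" "snd y = b (fst y - 1)"
      "\<And>r. fst x < r \<Longrightarrow> r < fst y \<Longrightarrow> b (r - 1) = a r" using u unfolding up_def by auto
    consider "fst y < p" | "fst y = p" | "fst y > p \<and> fst x < p" | "fst x = p" | "fst x > p"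
      by linarith
    then show ?thesis
    proof cases
      case 3 then show ?thesis using u1(4)[of p] by (simp add: hn_def)
    qed (use u1 in \<open>auto simp: hn_def\<close>)
  qed
  show ?thesis using pn_chain[OF assms] key[of x y] key[of y x] by auto
qed

lemma lift_hn: "x \<in> cycle_nodes nc m \<Longrightarrow> lift (hn p H) $ pn x = hn p H x"
  by (rule lift_pn[OF hn_resp])

lemma hdiff:
  assumes "x \<in> I"
  shows "lift (hn p H) $ B x - lift (hn p H) $ A x = (if fst x = p then H (nx (snd x)) - H (snd x) else 0)"
proof -
  have "lift (hn p H) $ B x = hn p H (fst x, nx (snd x))" "lift (hn p H) $ A x = hn p H x"
    using lift_hn I_nodes[OF assms] unfolding A_def B_def by auto
  then show ?thesis by (simp add: hn_def)
qed

lemma sum_I_single: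
  assumes p: "p < m" and z: "\<And>q k. q \<noteq> p \<Longrightarrow> g (q, k) = 0"
  shows "(\<Sum>x\<in>I. g x) = (\<Sum>k<nc. g (p, k))"
proof -
  have "(\<Sum>x\<in>I. g x) = (\<Sum>q<m. \<Sum>k<nc. g (q, k))"
    unfolding I_def by (simp add: sum.cartesian_product)
  also have "\<dots> = (\<Sum>k<nc. g (p, k)) + (\<Sum>q\<in>{..<m} - {p}. \<Sum>k<nc. g (q, k))"
    using p by (subst sum.remove[of _ p]) auto
  also have "(\<Sum>q\<in>{..<m} - {p}. \<Sum>k<nc. g (q, k)) = 0"
    using z by (intro sum.neutral) auto
  finally show ?thesis by simp
qed

lemma flow_step:
  assumes eq: "F z = 0" and p: "p < m" and k0: "k0 < nc"
  shows "sin (dd z (p, k0)) = sin (dd z (p, nx k0))"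
proof -
  define H where "H j = (if j = nx k0 then 1 else 0 :: real)" for j
  let ?h = "lift (hn p H)"
  have "0 = F z \<bullet> ?h" using eq by simp
  also have "\<dots> = - (\<Sum>x\<in>I. sin (dd z x) * (if fst x = p then H (nx (snd x)) - H (snd x) else 0))"
    unfolding grad by (intro arg_cong[where f=uminus] sum.cong refl) (simp add: hdiff)
  also have "\<dots> = - (\<Sum>k<nc. sin (dd z (p, k)) * (H (nx k) - H k))"
    by (subst sum_I_single[OF p]) auto
  also have "(\<Sum>k<nc. sin (dd z (p, k)) * (H (nx k) - H k))
      = (\<Sum>k<nc. if k = k0 then sin (dd z (p, k)) else 0) - (\<Sum>k<nc. if k = nx k0 then sin (dd z (p, k)) else 0)"
  proof -
    have "(\<Sum>k<nc. sin (dd z (p, k)) * (H (nx k) - H k))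
        = (\<Sum>k<nc. (if k = k0 then sin (dd z (p, k)) else 0) - (if k = nx k0 then sin (dd z (p, k)) else 0))"
    proof (rule sum.cong[OF refl])
      fix k assume "k \<in> {..<nc}"
      then have "nx k = nx k0 \<longleftrightarrow> k = k0" using nx_inj k0 by auto
      then show "sin (dd z (p, k)) * (H (nx k) - H k) = (if k = k0 then sin (dd z (p, k)) else 0) - (if k = nx k0 then sin (dd z (p, k)) else 0)"
        by (simp add: H_def)
    qed
    then show ?thesis by (simp add: sum_subtractf)
  qed
  also have "\<dots> = sin (dd z (p, k0)) - sin (dd z (p, nx k0))"
    using k0 nx_lt by (simp add: sum.delta)
  finally show ?thesis by simp
qed

lemma flow_const:
  assumes eq: "F z = 0" and p: "p < m"
  shows "k < nc \<Longrightarrow> sin (dd z (p, k)) = sin (dd z (p, 0))"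
proof (induction k)
  case 0 then show ?case by simp
next
  case (Suc k)
  then have "nx k = Suc k" using nx_cases[of k] by auto
  then show ?case using flow_step[OF eq p, of k] Suc by simp
qed

lemma nx_bij: "bij_betw nx {..<nc} {..<nc}"
proof -
  have inj: "inj_on nx {..<nc}" using nx_inj unfolding inj_on_def by auto
  have "nx ` {..<nc} = {..<nc}" by (rule endo_inj_surj) (use inj nx_lt in auto)
  then show ?thesis using inj unfolding bij_betw_def by simp
qed

lemma winding: "(\<Sum>k<nc. dd z (p, k)) = 0"
proof -
  have "(\<Sum>k<nc. z $ pn (p, nx k)) = (\<Sum>k<nc. z $ pn (p, k))"
    using sum.reindex_bij_betw[OF nx_bij, of "\<lambda>k. z $ pn (p, k)"] by simp
  then show ?thesis unfolding dd_def A_def B_def by (simp add: sum_subtractf)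
qed

definition WV :: "real set" where
  "WV = (\<lambda>v. - (\<Sum>q<m. v q)) ` (PiE {..<m} (\<lambda>_. CV nc))"

lemma finite_WV: "finite WV"
  unfolding WV_def by (intro finite_imageI finite_PiE) (auto simp: finite_CV)

lemma W_crit: assumes eq: "F z = 0" shows "W z \<in> WV"
proof -
  define v where "v = restrict (\<lambda>q. \<Sum>k<nc. cos (dd z (q, k))) {..<m}"
  have vm: "v \<in> PiE {..<m} (\<lambda>_. CV nc)"
  proof -
    have "(\<Sum>k<nc. cos (dd z (q, k))) \<in> CV nc" if "q < m" for q
      by (rule cyc_val[OF flow_const[OF eq that] winding])
    then show ?thesis unfolding v_def by auto
  qed
  have "W z = - (\<Sum>q<m. v q)"
    unfolding W_def v_def I_def by (simp add: sum.cartesian_product)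
  then show ?thesis unfolding WV_def using vm by blast
qed

lemma hn_bound:
  fixes C :: real
  assumes x: "x \<in> cycle_nodes nc m" and Hb: "\<And>j. j < nc \<Longrightarrow> \<bar>H j\<bar> \<le> C" and p: "p < m"
  shows "\<bar>hn p H x\<bar> \<le> C"
proof -
  obtain q l where xq: "x = (q, l)" "q < m" "l < nc" using x by (auto simp: cycle_nodes_def)
  consider "q < p" | "q = p" | "q > p" by linarith
  then show ?thesis
  proof cases
    case 1
    then have "p - 1 + 1 < m" using xq p by auto
    then have "b (p - 1) < nc" using ab by blast
    then show ?thesis using 1 xq Hb by (simp add: hn_def)
  next
    case 2 then show ?thesis using xq Hb by (simp add: hn_def)
  next
    case 3
    then have "p + 1 < m" using xq by auto
    then have "a p < nc" using ab by blast
    then show ?thesis using 3 xq Hb by (simp add: hn_def)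
  qed
qed

lemma norm_lift_hn:
  fixes C :: real
  assumes Hb: "\<And>j. j < nc \<Longrightarrow> \<bar>H j\<bar> \<le> C" and p: "p < m"
  shows "norm (lift (hn p H)) \<le> CARD('v) * C"
proof -
  have "\<bar>lift (hn p H) $ v\<bar> \<le> C" for v
  proof -
    obtain x where "x \<in> cycle_nodes nc m" "lift (hn p H) $ v = hn p H x" using lift_any by blast
    then show ?thesis using hn_bound[OF _ Hb p] by simp
  qed
  then have "(\<Sum>v\<in>UNIV. \<bar>lift (hn p H) $ v\<bar>) \<le> (\<Sum>v\<in>(UNIV::'v set). C)"
    by (intro sum_mono) auto
  then show ?thesis using norm_le_l1_cart[of "lift (hn p H)"] by simp
qed

lemma descent:
  assumes eq: "F \<theta> = 0" and p: "p < m" and k0: "k0 < nc" and cn: "cos (dd \<theta> (p, k0)) \<le> 0"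
    and \<delta>: "\<delta> > 0"
  shows "\<exists>y. dist y \<theta> < \<delta> \<and> W y < W \<theta>"
proof -
  define K where "K = real nc - 1"
  have K2: "K \<ge> 2" using nc3 by (simp add: K_def)
  define s where "s = sin (dd \<theta> (p, k0))"
  define c where "c = - cos (dd \<theta> (p, k0))"
  have c0: "c \<ge> 0" using cn by (simp add: c_def)
  have cs1: "c\<^sup>2 + s\<^sup>2 = 1" by (simp add: c_def s_def)
  have sk: "sin (dd \<theta> (p, k)) = s" if "k < nc" for k
  proof -
    have e1: "sin (dd \<theta> (p, k)) = sin (dd \<theta> (p, 0))" by (rule flow_const[OF eq p that])
    have e2: "sin (dd \<theta> (p, k0)) = sin (dd \<theta> (p, 0))" by (rule flow_const[OF eq p k0])
    show ?thesis unfolding s_def using e1 e2 by (rule trans[OF _ sym])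
  qed
  have ck: "cos (dd \<theta> (p, k)) \<le> c" if "k < nc" for k
  proof -
    have e: "(cos (dd \<theta> (p, k)))\<^sup>2 = 1 - s\<^sup>2" using sk[OF that] by (simp add: cos_squared_eq)
    have "c\<^sup>2 = 1 - s\<^sup>2" using cs1 by linarith
    then have "(cos (dd \<theta> (p, k)))\<^sup>2 \<le> c\<^sup>2" using e by linarith
    then show ?thesis using c0 by (rule power2_le_imp_le)
  qed
  define t where "t = min (pi / (2 * K)) (\<delta> / (2 * CARD('v) * nc))"
  have t0: "t > 0" using K2 \<delta> nc3 by (simp add: t_def)
  have tK: "t \<le> pi / (2 * K)" by (simp add: t_def)
  define \<sigma> :: real where "\<sigma> = (if s \<ge> 0 then -1 else 1)"
  define u where "u = \<sigma> * t"
  define H where "H j = u * (real j - (if j > k0 then real nc else 0))" for j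
  define h where "h = lift (hn p H)"
  define y where "y = \<theta> + h"
  have Hd: "H (nx k) - H k = (if k = k0 then - K * u else u)" if k: "k < nc" for k
  proof -
    consider "k + 1 < nc" "nx k = k + 1" | "k + 1 = nc" "nx k = 0" using nx_cases[OF k] by auto
    then show ?thesis
    proof cases
      case 1
      consider "k < k0" | "k = k0" | "k > k0" by linarith
      then show ?thesis
        by cases (use 1 in \<open>auto simp: H_def K_def algebra_simps\<close>)
    next
      case 2
      then have "k \<ge> k0" using k0 by simp
      then consider "k = k0" | "k > k0" by linarith
      then show ?thesis
      proof cases
        case 1
        have rn: "real nc = real k0 + 1" using 1 2 by simp
        show ?thesis using 1 2 unfolding H_def K_def rn by (simp add: algebra_simps)
      next
        case 3: 2
        have rn: "real nc = real k + 1" using 2 by simp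
        show ?thesis using 3 2 unfolding H_def K_def rn by (simp add: algebra_simps)
      qed
    qed
  qed
  have Wdiff: "W y - W \<theta> = (\<Sum>k<nc. cos (dd \<theta> (p, k)) - cos (dd \<theta> (p, k) + (H (nx k) - H k)))"
  proof -
    have ddy: "dd y x = dd \<theta> x + (if fst x = p then H (nx (snd x)) - H (snd x) else 0)" if "x \<in> I" for x
      using hdiff[OF that, of p H] unfolding dd_def y_def h_def by simp
    have "W y - W \<theta> = (\<Sum>x\<in>I. cos (dd \<theta> x) - cos (dd y x))"
      unfolding W_def by (simp add: sum_subtractf)
    also have "\<dots> = (\<Sum>x\<in>I. cos (dd \<theta> x) - cos (dd \<theta> x + (if fst x = p then H (nx (snd x)) - H (snd x) else 0)))"
      by (rule sum.cong[OF refl]) (simp add: ddy)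
    also have "\<dots> = (\<Sum>k<nc. cos (dd \<theta> (p, k)) - cos (dd \<theta> (p, k) + (H (nx k) - H k)))"
      by (subst sum_I_single[OF p]) auto
    finally show ?thesis .
  qed
  define G where "G k = cos (dd \<theta> (p, k)) - cos (dd \<theta> (p, k) + (H (nx k) - H k))" for k
  have Gform: "G k = cos (dd \<theta> (p, k)) * (1 - cos (H (nx k) - H k)) + s * sin (H (nx k) - H k)" if "k < nc" for k
    unfolding G_def cos_add using sk[OF that] by (simp add: algebra_simps)
  have Gk0: "G k0 = - c * (1 - cos (K * u)) - s * sin (K * u)"
    using Gform[OF k0] Hd[OF k0] by (simp add: c_def)
  have Gk: "G k \<le> c * (1 - cos u) + s * sin u" if "k < nc" "k \<noteq> k0" for k
  proof -
    have "G k = cos (dd \<theta> (p, k)) * (1 - cos u) + s * sin u" using Gform[OF that(1)] Hd[OF that(1)] that by simp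
    also have "\<dots> \<le> c * (1 - cos u) + s * sin u"
      using ck[OF that(1)] by (intro add_right_mono mult_right_mono) auto
    finally show ?thesis .
  qed
  have "(\<Sum>k<nc. G k) = G k0 + (\<Sum>k\<in>{..<nc} - {k0}. G k)"
    using k0 by (subst sum.remove[of _ k0]) auto
  also have "(\<Sum>k\<in>{..<nc} - {k0}. G k) \<le> (\<Sum>k\<in>{..<nc} - {k0}. c * (1 - cos u) + s * sin u)"
    using Gk by (intro sum_mono) auto
  also have "\<dots> = K * (c * (1 - cos u) + s * sin u)"
    using k0 by (simp add: K_def of_nat_diff)
  finally have Tle: "(\<Sum>k<nc. G k) \<le> c * (K * (1 - cos u) - (1 - cos (K * u))) + s * (K * sin u - sin (K * u))"
    unfolding Gk0 by (simp add: algebra_simps)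
  have sig: "\<sigma> = 1 \<or> \<sigma> = -1" by (simp add: \<sigma>_def)
  have cu: "cos u = cos t" "cos (K * u) = cos (K * t)"
    using sig by (auto simp: u_def)
  have su: "s * (K * sin u - sin (K * u)) = - \<bar>s\<bar> * (K * sin t - sin (K * t))"
    using sig unfolding u_def \<sigma>_def by (auto simp: algebra_simps)
  have X: "K * (1 - cos t) - (1 - cos (K * t)) < 0" using cos_ineq_strict[OF K2 t0 tK] by simp
  have Y: "K * sin t - sin (K * t) > 0" using sin_ineq_strict[OF K2 t0 tK] by simp
  have "c > 0 \<or> \<bar>s\<bar> > 0"
  proof (rule ccontr)
    assume "\<not> (c > 0 \<or> \<bar>s\<bar> > 0)"
    then have "c = 0" "s = 0" using c0 by auto
    then show False using cs1 by simp
  qed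
  then have neg: "c * (K * (1 - cos t) - (1 - cos (K * t))) - \<bar>s\<bar> * (K * sin t - sin (K * t)) < 0"
  proof
    assume "c > 0"
    then have "c * (K * (1 - cos t) - (1 - cos (K * t))) < 0" using X by (simp add: mult_pos_neg)
    moreover have "\<bar>s\<bar> * (K * sin t - sin (K * t)) \<ge> 0" using Y by simp
    ultimately show ?thesis by linarith
  next
    assume "\<bar>s\<bar> > 0"
    then have "\<bar>s\<bar> * (K * sin t - sin (K * t)) > 0" using Y by simp
    moreover have "c * (K * (1 - cos t) - (1 - cos (K * t))) \<le> 0" using X c0 by (simp add: mult_nonneg_nonpos)
    ultimately show ?thesis by linarith
  qed
  have WyW: "W y < W \<theta>"
    using Wdiff Tle neg unfolding cu su G_def by simp
  have Hb: "\<bar>H j\<bar> \<le> t * real nc" if "j < nc" for j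
  proof -
    have "\<bar>real j - (if j > k0 then real nc else 0)\<bar> \<le> real nc" using that by auto
    moreover have "\<bar>u\<bar> = t" using sig t0 by (auto simp: u_def)
    ultimately show ?thesis unfolding H_def abs_mult using t0 by (simp add: mult_left_mono)
  qed
  have "dist y \<theta> = norm h" by (simp add: y_def dist_norm)
  also have "\<dots> \<le> CARD('v) * (t * real nc)" unfolding h_def by (rule norm_lift_hn[OF Hb p])
  also have "\<dots> \<le> CARD('v) * ((\<delta> / (2 * CARD('v) * nc)) * real nc)"
    by (intro mult_left_mono mult_right_mono) (auto simp: t_def)
  also have "\<dots> = \<delta> / 2" using nc3 by simp
  also have "\<dots> < \<delta>" using \<delta> by simp
  finally show ?thesis using WyW by blast
qed

lemma F_comp: "F z $ i = (\<Sum>j\<in>UNIV. (if E i j then 1 else 0) * sin (z $ j - z $ i))"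
  unfolding kuramoto_field_def by simp

lemma F_lip: "norm (F z1 - F z2) \<le> (2 * real CARD('v) ^ 2) * norm (z1 - z2)"
proof -
  have ci: "\<bar>(F z1 - F z2) $ i\<bar> \<le> real CARD('v) * (2 * norm (z1 - z2))" for i
  proof -
    have "\<bar>(F z1 - F z2) $ i\<bar> = \<bar>\<Sum>j\<in>UNIV. (if E i j then 1 else 0) * (sin (z1 $ j - z1 $ i) - sin (z2 $ j - z2 $ i))\<bar>"
      unfolding vector_minus_component F_comp by (simp add: sum_subtractf algebra_simps)
    also have "\<dots> \<le> (\<Sum>j\<in>UNIV. \<bar>(if E i j then 1 else 0) * (sin (z1 $ j - z1 $ i) - sin (z2 $ j - z2 $ i))\<bar>)"
      by (rule sum_abs)
    also have "\<dots> \<le> (\<Sum>j\<in>(UNIV::'v set). 2 * norm (z1 - z2))"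
    proof (rule sum_mono)
      fix j
      have "\<bar>(if E i j then 1 else 0) * (sin (z1 $ j - z1 $ i) - sin (z2 $ j - z2 $ i))\<bar> \<le> \<bar>sin (z1 $ j - z1 $ i) - sin (z2 $ j - z2 $ i)\<bar>"
        by (simp add: abs_mult)
      also have "\<dots> \<le> \<bar>(z1 $ j - z1 $ i) - (z2 $ j - z2 $ i)\<bar>" by (rule abs_sin_diff_le)
      also have "\<dots> \<le> \<bar>(z1 - z2) $ j\<bar> + \<bar>(z1 - z2) $ i\<bar>" by simp
      also have "\<dots> \<le> 2 * norm (z1 - z2)" using component_le_norm_cart[of "z1 - z2" i] component_le_norm_cart[of "z1 - z2" j] by simp
      finally show "\<bar>(if E i j then 1 else 0) * (sin (z1 $ j - z1 $ i) - sin (z2 $ j - z2 $ i))\<bar> \<le> 2 * norm (z1 - z2)" .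
    qed
    also have "\<dots> = real CARD('v) * (2 * norm (z1 - z2))" by simp
    finally show ?thesis .
  qed
  have "norm (F z1 - F z2) \<le> (\<Sum>i\<in>UNIV. \<bar>(F z1 - F z2) $ i\<bar>)" by (rule norm_le_l1_cart)
  also have "\<dots> \<le> (\<Sum>i\<in>(UNIV::'v set). real CARD('v) * (2 * norm (z1 - z2)))" by (intro sum_mono ci)
  also have "\<dots> = (2 * real CARD('v) ^ 2) * norm (z1 - z2)" by (simp add: power2_eq_square)
  finally show ?thesis .
qed

lemma F_bnd: "norm (F z1) \<le> real CARD('v) ^ 2"
proof -
  have ci: "\<bar>F z1 $ i\<bar> \<le> real CARD('v)" for i
  proof -
    have "\<bar>F z1 $ i\<bar> \<le> (\<Sum>j\<in>UNIV. \<bar>(if E i j then 1 else 0) * sin (z1 $ j - z1 $ i)\<bar>)"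
      unfolding F_comp by (rule sum_abs)
    also have "\<dots> \<le> (\<Sum>j\<in>(UNIV::'v set). 1)"
      by (intro sum_mono) (simp add: abs_mult)
    finally show ?thesis by simp
  qed
  have "norm (F z1) \<le> (\<Sum>i\<in>UNIV. \<bar>F z1 $ i\<bar>)" by (rule norm_le_l1_cart)
  also have "\<dots> \<le> (\<Sum>i\<in>(UNIV::'v set). real CARD('v))" by (intro sum_mono ci)
  finally show ?thesis by (simp add: power2_eq_square)
qed

lemma F_cont: "continuous_on UNIV F"
proof (rule continuous_onI)
  fix x and e :: real assume e: "e > 0"
  define L where "L = 2 * real CARD('v) ^ 2 + 1"
  have L: "L > 0" unfolding L_def by (simp add: add_pos_nonneg)
  show "\<exists>d>0. \<forall>x'\<in>UNIV. dist x' x < d \<longrightarrow> dist (F x') (F x) \<le> e"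
  proof (intro exI[of _ "e / L"] conjI ballI impI)
    fix x' assume "dist x' x < e / L"
    then have "L * dist x' x \<le> e" using L by (simp add: field_simps)
    moreover have "dist (F x') (F x) \<le> L * dist x' x"
      using F_lip[of x' x] unfolding dist_norm L_def
      by (smt (verit) mult_right_mono norm_ge_zero)
    ultimately show "dist (F x') (F x) \<le> e" by simp
  qed (use e L in auto)
qed

lemma W_cont: "continuous_on UNIV W"
  unfolding W_def dd_def by (intro continuous_intros)

lemma W_bnd: "\<bar>W z\<bar> \<le> real (card I)"
proof -
  have "\<bar>W z\<bar> \<le> (\<Sum>x\<in>I. \<bar>cos (dd z x)\<bar>)" unfolding W_def abs_minus_cancel by (rule sum_abs)
  also have "\<dots> \<le> (\<Sum>x\<in>I. 1)" by (intro sum_mono) simp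
  finally show ?thesis by simp
qed

lemma W_deriv:
  assumes "(x has_vector_derivative F (x t)) (at t within S)"
  shows "((\<lambda>t. W (x t)) has_real_derivative (- (F (x t) \<bullet> F (x t)))) (at t within S)"
proof -
  have comp: "((\<lambda>t. x t $ v) has_real_derivative F (x t) $ v) (at t within S)" for v
    unfolding has_real_derivative_iff_has_vector_derivative
    by (rule bounded_linear.has_vector_derivative[OF bounded_linear_vec_nth assms])
  have "((\<lambda>t. W (x t)) has_real_derivative
      - (\<Sum>y\<in>I. - sin (x t $ B y - x t $ A y) * (F (x t) $ B y - F (x t) $ A y))) (at t within S)"
    unfolding W_def dd_def
    by (intro derivative_intros comp)
  moreover have "- (\<Sum>y\<in>I. - sin (x t $ B y - x t $ A y) * (F (x t) $ B y - F (x t) $ A y)) = - (F (x t) \<bullet> F (x t))"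
    unfolding grad dd_def by (simp add: sum_negf)
  ultimately show ?thesis by simp
qed

lemma cos_pos:
  assumes eq: "F \<theta> = 0" and st: "lyapunov_stable F \<theta>" and e: "E i j"
  shows "cos (\<theta> $ i - \<theta> $ j) > 0"
proof (rule ccontr)
  assume "\<not> cos (\<theta> $ i - \<theta> $ j) > 0"
  then have cle: "cos (\<theta> $ i - \<theta> $ j) \<le> 0" by simp
  from e obtain x0 where x0: "x0 \<in> I" "(i = A x0 \<and> j = B x0) \<or> (j = A x0 \<and> i = B x0)"
    unfolding E_iff by blast
  have cdd: "cos (dd \<theta> x0) \<le> 0"
    using x0(2) cle unfolding dd_def by (metis cos_minus minus_diff_eq)
  obtain p k0 where pk: "x0 = (p, k0)" "p < m" "k0 < nc" using x0(1) by (auto simp: I_def)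
  define S' where "S' = {v \<in> WV. v < W \<theta>}"
  have fS: "finite S'" using finite_WV by (simp add: S'_def)
  obtain g where g: "g > 0" and gp: "\<And>z. F z = 0 \<Longrightarrow> W z < W \<theta> \<Longrightarrow> W z \<le> W \<theta> - g"
  proof (cases "S' = {}")
    case True
    show ?thesis
    proof (rule that[of 1])
      fix z assume "F z = 0" "W z < W \<theta>"
      then have "W z \<in> S'" using W_crit by (simp add: S'_def)
      then show "W z \<le> W \<theta> - 1" using True by simp
    qed simp
  next
    case False
    have mx: "Max S' \<in> S'" using Max_in[OF fS False] .
    show ?thesis
    proof (rule that[of "W \<theta> - Max S'"])
      show "W \<theta> - Max S' > 0" using mx by (simp add: S'_def)
      fix z assume "F z = 0" "W z < W \<theta>"
      then have "W z \<in> S'" using W_crit by (simp add: S'_def)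
      then show "W z \<le> W \<theta> - (W \<theta> - Max S')" using Max_ge[OF fS] by simp
    qed
  qed
  obtain d where d: "d > 0" and dp: "\<And>z. dist z \<theta> < d \<Longrightarrow> \<bar>W z - W \<theta>\<bar> < g"
    using W_cont g unfolding continuous_on_iff dist_real_def by (meson UNIV_I)
  define \<epsilon> where "\<epsilon> = d / 2"
  have \<epsilon>: "\<epsilon> > 0" "\<epsilon> < d" using d by (auto simp: \<epsilon>_def)
  obtain \<delta> where \<delta>: "\<delta> > 0" and stab: "\<And>x. is_solution_from0 F x \<Longrightarrow> dist (x 0) \<theta> < \<delta> \<Longrightarrow> (\<forall>t\<ge>0. dist (x t) \<theta> < \<epsilon>)"
    using st \<epsilon>(1) unfolding lyapunov_stable_def by blast
  obtain y where y: "dist y \<theta> < \<delta>" "W y < W \<theta>"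
    using descent[OF eq pk(2,3) _ \<delta>] cdd pk(1) by blast
  define L where "L = 2 * real CARD('v) ^ 2 + 1"
  have L: "L > 0" unfolding L_def by (simp add: add_pos_nonneg)
  have lip: "norm (F z1 - F z2) \<le> L * norm (z1 - z2)" for z1 z2
    using F_lip[of z1 z2] unfolding L_def by (smt (verit) mult_right_mono norm_ge_zero)
  obtain x where x0y: "x 0 = y" and sol: "\<And>t. t \<ge> 0 \<Longrightarrow> (x has_vector_derivative F (x t)) (at t within {0..})"
    using ode_exists[OF lip L F_bnd, of y] by blast
  have issol: "is_solution_from0 F x" unfolding is_solution_from0_def using sol by blast
  have inball: "dist (x t) \<theta> < \<epsilon>" if "t \<ge> 0" for t
    using stab[OF issol] x0y y(1) that by blast
  define w where "w t = W (x t)" for t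
  have wd: "(w has_real_derivative (- (F (x t) \<bullet> F (x t)))) (at t within {0..})" if "t \<ge> 0" for t
    unfolding w_def by (rule W_deriv[OF sol[OF that]])
  have wd': "(w has_real_derivative (- (F (x t) \<bullet> F (x t)))) (at t)" if "t > 0" for t
  proof -
    have "at t within {0..} = at t" by (rule at_within_open_subset[of _ "{0<..}"]) (use that in auto)
    then show ?thesis using wd[of t] that by simp
  qed
  have wc: "continuous_on {0..T} w" for T
  proof -
    have cw: "continuous (at t within {0..}) w" if "t \<in> {0..T}" for t
      using wd[of t] that by (auto intro: DERIV_continuous)
    have "continuous (at t within {0..T}) w" if "t \<in> {0..T}" for t
      using continuous_within_subset[OF cw[OF that], of "{0..T}"] by auto
    then show ?thesis unfolding continuous_on_eq_continuous_within by blast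
  qed
  have mvtw: "\<exists>\<xi>. 0 < \<xi> \<and> \<xi> < T \<and> w T - w 0 = (T - 0) * (- (F (x \<xi>) \<bullet> F (x \<xi>)))" if "T > 0" for T
    by (rule mvt_real[OF that wc wd'])
  have wmono: "w t \<le> W y" if "t \<ge> 0" for t
  proof (cases "t = 0")
    case True then show ?thesis using x0y by (simp add: w_def)
  next
    case False
    then have "t > 0" using that by simp
    then obtain \<xi> where e0: "w t - w 0 = (t - 0) * (- (F (x \<xi>) \<bullet> F (x \<xi>)))" using mvtw[OF \<open>t > 0\<close>] by blast
    then have e: "w t - w 0 = t * (- (F (x \<xi>) \<bullet> F (x \<xi>)))" by simp
    have "t * (F (x \<xi>) \<bullet> F (x \<xi>)) \<ge> 0" using \<open>t > 0\<close> by simp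
    moreover have "w 0 = W y" using x0y by (simp add: w_def)
    ultimately show ?thesis using e by linarith
  qed
  define K where "K = cball \<theta> \<epsilon> \<inter> {z. W z \<le> W y}"
  have Kc: "compact K" unfolding K_def
    by (intro compact_Int_closed compact_cball closed_Collect_le continuous_on_const W_cont)
  have xK: "x t \<in> K" if "t \<ge> 0" for t
    using inball[OF that] wmono[OF that] unfolding K_def w_def by (auto simp: dist_commute less_imp_le)
  show False
  proof (cases "\<exists>z\<in>K. F z = 0")
    case True
    then obtain z where z: "z \<in> K" "F z = 0" by blast
    have "W z < W \<theta>" using z(1) y(2) by (auto simp: K_def)
    then have "W z \<le> W \<theta> - g" using gp[OF z(2)] by simp
    moreover have "dist z \<theta> < d" using z(1) \<epsilon> by (auto simp: K_def dist_commute)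
    then have "\<bar>W z - W \<theta>\<bar> < g" by (rule dp)
    ultimately show False by simp
  next
    case False
    have Kne: "K \<noteq> {}" using xK[of 0] by auto
    have fc: "continuous_on K (\<lambda>z. F z \<bullet> F z)"
      by (intro continuous_intros continuous_on_subset[OF F_cont]) auto
    obtain z0 where z0: "z0 \<in> K" "\<And>z. z \<in> K \<Longrightarrow> F z0 \<bullet> F z0 \<le> F z \<bullet> F z"
      using continuous_attains_inf[OF Kc Kne fc] by blast
    define \<mu> where "\<mu> = F z0 \<bullet> F z0"
    have \<mu>: "\<mu> > 0" using False z0(1) by (auto simp: \<mu>_def)
    define T where "T = (2 * real (card I) + 1) / \<mu>"
    have T: "T > 0" using \<mu> by (simp add: T_def add_pos_nonneg)
    obtain \<xi> where xi: "0 < \<xi>" "\<xi> < T" "w T - w 0 = (T - 0) * (- (F (x \<xi>) \<bullet> F (x \<xi>)))"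
      using mvtw[OF T] by blast
    have "\<mu> \<le> F (x \<xi>) \<bullet> F (x \<xi>)" using z0(2)[OF xK[of \<xi>]] xi by (simp add: \<mu>_def)
    then have "T * \<mu> \<le> T * (F (x \<xi>) \<bullet> F (x \<xi>))" using T by simp
    moreover have "T * \<mu> = 2 * real (card I) + 1" using \<mu> by (simp add: T_def)
    moreover have "\<bar>w T\<bar> \<le> real (card I)" "\<bar>w 0\<bar> \<le> real (card I)" unfolding w_def by (rule W_bnd)+
    moreover have "w T - w 0 = - (T * (F (x \<xi>) \<bullet> F (x \<xi>)))" using xi(3) by simp
    ultimately show False by linarith
  qed
qed

end


lemma cos_pos_rep:
  fixes x :: real
  assumes c: "cos x > 0"
  shows "\<exists>k::int. - (pi / 2) < x + 2 * pi * k \<and> x + 2 * pi * k < pi / 2"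
proof -
  define q where "q = (x + pi) / (2 * pi)"
  define k where "k = - \<lfloor>q\<rfloor>"
  define r where "r = x + 2 * pi * k"
  have f1: "of_int \<lfloor>q\<rfloor> \<le> q" "q < of_int \<lfloor>q\<rfloor> + 1" by linarith+
  have pq: "2 * pi * q = x + pi" unfolding q_def using pi_gt_zero by simp
  have r1: "r \<ge> - pi"
  proof -
    have "2 * pi * of_int \<lfloor>q\<rfloor> \<le> 2 * pi * q" using f1(1) pi_gt_zero by simp
    then show ?thesis unfolding r_def k_def using pq by simp
  qed
  have r2: "r < pi"
  proof -
    have "2 * pi * q < 2 * pi * (of_int \<lfloor>q\<rfloor> + 1)" using f1(2) pi_gt_zero by simp
    then show ?thesis unfolding r_def k_def using pq by (simp add: algebra_simps)
  qed
  have cr: "cos r = cos x"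
    using sin_cos_eq_iff[of r x] unfolding r_def by auto
  have "r < pi / 2"
  proof (rule ccontr)
    assume "\<not> r < pi / 2"
    then have "cos r \<le> cos (pi / 2)" using r2 by (intro cos_monotone_0_pi_le) auto
    then show False using c cr by simp
  qed
  moreover have "- (pi / 2) < r"
  proof (rule ccontr)
    assume "\<not> - (pi / 2) < r"
    then have "cos (- r) \<le> cos (pi / 2)" using r1 by (intro cos_monotone_0_pi_le) auto
    then show False using c cr by simp
  qed
  ultimately show ?thesis unfolding r_def by blast
qed

theorem mainTheorem5:
  fixes nc m :: nat and E :: "'v::finite \<Rightarrow> 'v \<Rightarrow> bool" and \<theta> :: "real ^ 'v"
  assumes "nc \<ge> 3" and "m \<ge> 1"
    and "rule_R_graph nc m E"
    and "phase_locked E \<theta>"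
    and "lyapunov_stable (kuramoto_field E) \<theta>"
  shows "\<forall>i j. E i j \<longrightarrow>
           (\<exists>k::int. - (pi / 2) < \<theta> $ i - \<theta> $ j + 2 * pi * k \<and>
                     \<theta> $ i - \<theta> $ j + 2 * pi * k < pi / 2)"
proof (intro allI impI)
  fix i j assume e: "E i j"
  obtain pn :: "nat \<times> nat \<Rightarrow> 'v" and a b where
    ab: "\<forall>p. p + 1 < m \<longrightarrow> a p < nc \<and> b p < nc" and
    su: "pn ` cycle_nodes nc m = UNIV" and
    id: "\<forall>x\<in>cycle_nodes nc m. \<forall>y\<in>cycle_nodes nc m.
            pn x = pn y \<longleftrightarrow> (x, y) \<in> (ident_rel m a b \<union> (ident_rel m a b)\<inverse>)\<^sup>*" and
    ed: "\<forall>i j. E i j \<longleftrightarrow>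
            (\<exists>p k. p < m \<and> k < nc \<and>
               ((i = pn (p, k) \<and> j = pn (p, (k + 1) mod nc)) \<or>
                (j = pn (p, k) \<and> i = pn (p, (k + 1) mod nc))))"
    using assms(3) unfolding rule_R_graph_def by blast
  interpret cactus nc m pn a b E
    by unfold_locales (use assms(1) ab su id ed in auto)
  have "cos (\<theta> $ i - \<theta> $ j) > 0"
    by (rule cos_pos[OF _ assms(5) e]) (use assms(4) in \<open>simp add: phase_locked_def\<close>)
  then show "\<exists>k::int. - (pi / 2) < \<theta> $ i - \<theta> $ j + 2 * pi * k \<and>
                     \<theta> $ i - \<theta> $ j + 2 * pi * k < pi / 2"
    by (rule cos_pos_rep)
qed


end
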